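(* Let $n\ge3$, $\alpha<1$, $q\in[1,\infty)$ and $x\in\mathbb{B}^n$. (1) If $q=\frac{2n-2}{n-\alpha}$ or $q=\frac{2n}{n-\alpha}$, then $l\mapsto I(\alpha,q,x,l)$ is constant on $\mathbb{S}^{n-1}$. (2) If $\frac{2n-2}{n-\alpha}<q<\frac{2n}{n-\alpha}$, then $\sup_{l\in\mathbb{S}^{n-1}}I(\alpha,q,x,l)=\max_{\beta\in[0,\pi/2]}I(\alpha,q,|x|e_1,l_\beta)=I(\alpha,q,|x|e_1,l_{\pi/2})$. (3) If $1\le q<\frac{2n-2}{n-\alpha}$ or $q>\frac{2n}{n-\alpha}$, then $\sup_{l\in\mathbb{S}^{n-1}}I(\alpha,q,x,l)=\max_{\beta\in[0,\pi/2]}I(\alpha,q,|x|e_1,l_\beta)=I(\alpha,q,|x|e_1,l_0)$.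
   Context: $\mathbb{B}^n$ is the open unit ball of $\mathbb{R}^n$, $\mathbb{S}^{n-1}$ the unit sphere with normalized surface measure $\sigma$; $e_i$ is the $i$-th standard unit vector and $l_\beta=\cos\beta\, e_1+\sin\beta\, e_2$. $I(\alpha,q,x,l)=\int_{\mathbb{S}^{n-1}}|\eta-x|^{(n-\alpha)q-2n+2}|\langle\eta,l\rangle|^q d\sigma(\eta)$. *)

theory Defs
  imports "HOL-Analysis.Analysis"
begin

text \<open>Integral against the normalized surface measure sigma on the unit sphere,
  realised via the cone-measure identity
  int_S f dsigma = (1 / |B|) int_B f(y / |y|) dy.\<close>
definition sphere_avg :: "('a::euclidean_space \<Rightarrow> real) \<Rightarrow> real" where
  "sphere_avg f =
     (LINT y : ball (0::'a) 1 | lborel. f (y /\<^sub>R norm y)) / measure lborel (ball (0::'a) 1)"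

definition I_int :: "real \<Rightarrow> real \<Rightarrow> 'a::euclidean_space \<Rightarrow> 'a \<Rightarrow> real" where
  "I_int \<alpha> q x l = sphere_avg (\<lambda>\<eta>.
      norm (\<eta> - x) powr ((real DIM('a) - \<alpha>) * q - 2 * real DIM('a) + 2) * \<bar>\<eta> \<bullet> l\<bar> powr q)"

definition l_vec :: "'a::real_vector \<Rightarrow> 'a \<Rightarrow> real \<Rightarrow> 'a" where
  "l_vec e1 e2 \<beta> = cos \<beta> *\<^sub>R e1 + sin \<beta> *\<^sub>R e2"

end

theory Submission
  imports Defs
begin


typedef (overloaded) ('a::euclidean_space) bidx = "{..<DIM('a)}" morphisms rep_bidx abs_bidx
  by (rule exI[of _ 0]) (simp add: DIM_positive)

instance bidx :: (euclidean_space) finite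
proof
  have "(UNIV :: 'a bidx set) = abs_bidx ` {..<DIM('a)}"
    by (rule type_definition.Abs_image[OF type_definition_bidx, symmetric])
  then show "finite (UNIV :: 'a bidx set)" by (metis finite_imageI finite_lessThan)
qed

instantiation bidx :: (euclidean_space) wellorder
begin
definition less_eq_bidx :: "'a bidx \<Rightarrow> 'a bidx \<Rightarrow> bool" where "less_eq_bidx x y \<longleftrightarrow> rep_bidx x \<le> rep_bidx y"
definition less_bidx :: "'a bidx \<Rightarrow> 'a bidx \<Rightarrow> bool" where "less_bidx x y \<longleftrightarrow> rep_bidx x < rep_bidx y"
instance
proof
  fix P :: "'a bidx \<Rightarrow> bool" and a
  assume H: "\<And>x. (\<And>y. y < x \<Longrightarrow> P y) \<Longrightarrow> P x"
  have "\<forall>x. rep_bidx x = k \<longrightarrow> P x" for k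
    by (induction k rule: less_induct) (metis H less_bidx_def)
  then show "P a" by blast
qed (auto simp: less_eq_bidx_def less_bidx_def rep_bidx_inject)
end

definition bas :: "nat \<Rightarrow> 'a::euclidean_space" where
  "bas = (SOME h. bij_betw h {..<DIM('a)} (Basis::'a set))"

lemma bij_bas: "bij_betw (bas :: nat \<Rightarrow> 'a::euclidean_space) {..<DIM('a)} Basis"
proof -
  have "\<exists>h. bij_betw h {..<DIM('a)} (Basis::'a set)"
    using ex_bij_betw_nat_finite[of "Basis::'a set"] by (simp add: atLeast0LessThan)
  then show ?thesis unfolding bas_def by (rule someI_ex)
qed

definition bb :: "'a bidx \<Rightarrow> 'a::euclidean_space" where "bb i = bas (rep_bidx i)"

lemma bij_bb: "bij_betw (bb :: 'a bidx \<Rightarrow> 'a::euclidean_space) UNIV Basis"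
proof -
  have "bij_betw rep_bidx (UNIV :: 'a bidx set) {..<DIM('a)}"
    by (metis bij_betw_def inj_on_def rep_bidx_inject type_definition.Rep_range type_definition_bidx)
  then show ?thesis unfolding bb_def
    using bij_bas bij_betw_trans[unfolded comp_def] by blast
qed

lemma bb_Basis[simp]: "bb i \<in> Basis"
  using bij_bb bij_betwE by blast

lemma bb_inner: "bb i \<bullet> bb j = (if i = j then 1 else 0)"
  using bij_bb by (auto simp: inner_Basis bij_betw_def inj_on_def)

definition phi :: "'a::euclidean_space \<Rightarrow> real^('a bidx)" where
  "phi x = (\<chi> i. x \<bullet> bb i)"
definition psi :: "real^('a bidx) \<Rightarrow> 'a::euclidean_space" where
  "psi v = (\<Sum>i\<in>UNIV. v$i *\<^sub>R bb i)"

lemma psi_inner_bb: "psi v \<bullet> bb j = v $ j"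
proof -
  have "psi v \<bullet> bb j = (\<Sum>i\<in>UNIV. v$i * (bb i \<bullet> bb j))"
    by (simp add: psi_def inner_sum_left)
  also have "\<dots> = (\<Sum>i\<in>UNIV. if i = j then v$i else 0)"
    by (rule sum.cong) (auto simp: bb_inner)
  finally show ?thesis by simp
qed

lemma phi_psi[simp]: "phi (psi v) = v"
  by (simp add: phi_def psi_inner_bb vec_eq_iff)

lemma psi_phi[simp]: "psi (phi x) = x"
proof -
  have "psi (phi x) = (\<Sum>i\<in>UNIV. (x \<bullet> bb i) *\<^sub>R bb i)" by (simp add: psi_def phi_def)
  also have "\<dots> = (\<Sum>b\<in>Basis. (x \<bullet> b) *\<^sub>R b)"
    by (rule sum.reindex_bij_betw[OF bij_bb])
  also have "\<dots> = x" by (rule euclidean_representation)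
  finally show ?thesis .
qed

lemma linear_phi: "linear phi"
proof (rule linearI)
  fix x y :: 'a and c :: real
  show "phi (x + y) = phi x + phi y" unfolding phi_def by (simp add: vec_eq_iff inner_add_left)
  show "phi (c *\<^sub>R x) = c *\<^sub>R phi x" unfolding phi_def by (simp add: vec_eq_iff)
qed

lemma linear_psi: "linear psi"
proof (rule linearI)
  fix x y :: "real^('a::euclidean_space bidx)" and c :: real
  show "psi (x + y) = (psi x + psi y :: 'a)" unfolding psi_def by (simp add: scaleR_add_left sum.distrib)
  show "psi (c *\<^sub>R x) = (c *\<^sub>R psi x :: 'a)" unfolding psi_def by (simp add: scaleR_sum_right)
qed

lemma phi_inner: "phi x \<bullet> phi y = x \<bullet> y"
proof -
  have c: "phi z $ i = z \<bullet> bb i" for z and i :: "'a bidx" by (simp add: phi_def)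
  have "phi x \<bullet> phi y = (\<Sum>i\<in>UNIV. (phi x $ i) * (phi y $ i))"
    unfolding inner_vec_def inner_real_def by (rule refl)
  also have "\<dots> = (\<Sum>i\<in>UNIV. (x \<bullet> bb i) * (y \<bullet> bb i))"
    by (simp only: c)
  also have "\<dots> = (\<Sum>b\<in>Basis. (x \<bullet> b) * (y \<bullet> b))"
    by (rule sum.reindex_bij_betw[OF bij_bb])
  also have "\<dots> = x \<bullet> y" by (rule euclidean_inner[symmetric])
  finally show ?thesis .
qed

lemma psi_inner: "psi v \<bullet> psi w = v \<bullet> w"
proof -
  have "psi v \<bullet> psi w = phi (psi v) \<bullet> phi (psi w)" by (simp only: phi_inner)
  then show ?thesis by (simp only: phi_psi)
qed


lemma prod_Basis_cart: "(\<Prod>b\<in>(Basis::(real^'n) set). f b) = (\<Prod>i\<in>UNIV. f (axis i 1))"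
proof -
  have B: "(Basis::(real^'n) set) = (\<lambda>i. axis i 1) ` UNIV"
    by (auto simp: Basis_vec_def)
  have "inj (\<lambda>i::'n. axis i (1::real))" by (auto simp: inj_on_def axis_eq_axis)
  then show ?thesis unfolding B by (simp add: prod.reindex)
qed

lemma emeasure_lborel_borel_lebesgue:
  fixes S :: "'a::euclidean_space set"
  assumes "S \<in> sets borel"
  shows "emeasure lebesgue S = emeasure lborel S"
  using assms by (simp add: main_part_sets)

lemma distr_orth_cart:
  fixes T :: "real^'n::{finite,wellorder} \<Rightarrow> real^'n::_"
  assumes T: "orthogonal_transformation T"
  shows "distr lborel borel T = lborel"
proof (rule lborel_eqI[symmetric])
  fix l u :: "(real, 'n) vec"
  assume le: "\<And>b. b \<in> Basis \<Longrightarrow> l \<bullet> b \<le> u \<bullet> b"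
  have lin: "linear T" using T by (rule orthogonal_transformation_linear)
  have cT: "continuous_on UNIV T"
    by (rule linear_continuous_on) (simp add: lin linear_conv_bounded_linear[symmetric])
  have mT: "T \<in> borel_measurable borel" using cT by (rule borel_measurable_continuous_onI)
  have bijT: "bij T" using T by (rule orthogonal_transformation_bij)
  have pre: "T -` box l u = inv T ` box l u"
    using bijT by (simp add: bij_vimage_eq_inv_image)
  have opn: "open (T -` box l u)"
    by (rule continuous_open_vimage[OF open_box], rule linear_continuous_at)
       (simp add: lin linear_conv_bounded_linear[symmetric])
  have "emeasure (distr lborel borel T) (box l u) = emeasure lborel (T -` box l u)"
    using mT by (simp add: emeasure_distr)
  also have "\<dots> = emeasure lebesgue (T -` box l u)"
    using opn by (simp add: emeasure_lborel_borel_lebesgue)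
  also have "\<dots> = emeasure lebesgue (inv T ` box l u)" by (simp add: pre)
  also have "\<dots> = ennreal (measure lebesgue (inv T ` box l u))"
    by (rule emeasure_eq_measure2) (simp add: measurable_orthogonal_image orthogonal_transformation_inv T)
  also have "\<dots> = ennreal (measure lebesgue (box l u))"
    by (simp add: measure_orthogonal_image orthogonal_transformation_inv T)
  also have "\<dots> = emeasure lebesgue (box l u)"
    by (rule emeasure_eq_measure2[symmetric]) simp
  also have "\<dots> = emeasure lborel (box l u)"
    by (simp add: emeasure_lborel_borel_lebesgue)
  also have "\<dots> = (\<Prod>b\<in>Basis. (u - l) \<bullet> b)" using le by simp
  finally show "emeasure (distr lborel borel T) (box l u) = (\<Prod>b\<in>Basis. (u - l) \<bullet> b)" .
qed simp

lemma measurable_psi: "psi \<in> borel_measurable borel"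
  by (intro borel_measurable_continuous_onI linear_continuous_on)
     (simp add: linear_psi linear_conv_bounded_linear[symmetric])

lemma measurable_phi: "phi \<in> borel_measurable borel"
  by (intro borel_measurable_continuous_onI linear_continuous_on)
     (simp add: linear_phi linear_conv_bounded_linear[symmetric])

lemma distr_psi: "distr (lborel :: (real^('a::euclidean_space bidx)) measure) borel psi = (lborel :: 'a measure)"
proof (rule lborel_eqI[symmetric])
  fix l u :: 'a
  assume le: "\<And>b. b \<in> Basis \<Longrightarrow> l \<bullet> b \<le> u \<bullet> b"
  have ph: "phi z $ i = z \<bullet> bb i" for z :: 'a and i by (simp add: phi_def)
  have rng: "(Basis::'a set) = range bb" using bij_bb by (metis bij_betw_def)
  have pre: "psi -` box l u = box (phi l) (phi u)"
  proof -
    have "psi v \<in> box l u \<longleftrightarrow> v \<in> box (phi l) (phi u)" for v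
    proof -
      have "psi v \<in> box l u \<longleftrightarrow> (\<forall>b\<in>Basis. l \<bullet> b < psi v \<bullet> b \<and> psi v \<bullet> b < u \<bullet> b)"
        by (simp add: mem_box)
      also have "\<dots> \<longleftrightarrow> (\<forall>i. l \<bullet> bb i < psi v \<bullet> bb i \<and> psi v \<bullet> bb i < u \<bullet> bb i)"
        by (subst rng) simp
      also have "\<dots> \<longleftrightarrow> v \<in> box (phi l) (phi u)"
        by (simp add: mem_box_cart psi_inner_bb ph)
      finally show ?thesis .
    qed
    then show ?thesis by auto
  qed
  have le': "\<And>b. b \<in> Basis \<Longrightarrow> phi l \<bullet> b \<le> phi u \<bullet> b"
    by (auto simp: Basis_vec_def inner_axis ph le)
  have "emeasure (distr lborel borel psi) (box l u) = emeasure lborel (psi -` box l u \<inter> space lborel)"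
    by (rule emeasure_distr) (simp_all add: measurable_psi)
  also have "\<dots> = (\<Prod>b\<in>Basis. (phi u - phi l) \<bullet> b)" unfolding pre using le' by simp
  also have "\<dots> = (\<Prod>i\<in>UNIV. (u - l) \<bullet> bb i)"
    by (simp add: prod_Basis_cart inner_axis ph inner_diff_left)
  also have "\<dots> = (\<Prod>b\<in>Basis. (u - l) \<bullet> b)"
    using prod.reindex_bij_betw[OF bij_bb, of "\<lambda>b. (u - l) \<bullet> b"] by simp
  finally show "emeasure (distr lborel borel psi) (box l u) = (\<Prod>b\<in>Basis. (u - l) \<bullet> b)"
    by simp
qed simp

lemma distr_orth:
  fixes T :: "'a::euclidean_space \<Rightarrow> 'a"
  assumes T: "orthogonal_transformation T"
  shows "distr lborel borel T = lborel"
proof -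
  define T' :: "real^('a bidx) \<Rightarrow> real^('a bidx)" where "T' = phi \<circ> T \<circ> psi"
  have lin: "linear T" using T by (rule orthogonal_transformation_linear)
  have oT': "orthogonal_transformation T'"
    unfolding orthogonal_transformation_def T'_def
  proof
    show "linear (phi \<circ> T \<circ> psi)"
      by (intro linear_compose linear_psi linear_phi lin)
    show "\<forall>v w. (phi \<circ> T \<circ> psi) v \<bullet> (phi \<circ> T \<circ> psi) w = v \<bullet> w"
      using T by (simp add: phi_inner psi_inner orthogonal_transformation_def)
  qed
  have mT: "T \<in> borel_measurable borel"
    by (intro borel_measurable_continuous_onI linear_continuous_on)
       (simp add: lin linear_conv_bounded_linear[symmetric])
  have mT': "T' \<in> borel_measurable borel"
    unfolding T'_def comp_def by (rule measurable_compose[OF measurable_compose[OF measurable_psi mT] measurable_phi])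
  have eq: "T \<circ> psi = psi \<circ> T'" by (simp add: T'_def fun_eq_iff)
  have "distr (lborel :: 'a measure) borel T = distr (distr lborel borel psi) borel T"
    by (simp add: distr_psi)
  also have "\<dots> = distr lborel borel (T \<circ> psi)"
    by (rule distr_distr) (use mT measurable_psi in simp_all)
  also have "\<dots> = distr lborel borel (psi \<circ> T')" by (simp add: eq)
  also have "\<dots> = distr (distr lborel borel T') borel psi"
    by (rule distr_distr[symmetric]) (use mT' measurable_psi in simp_all)
  also have "\<dots> = distr lborel borel psi"
    by (simp add: distr_orth_cart[OF oT'])
  also have "\<dots> = lborel" by (rule distr_psi)
  finally show ?thesis .
qed




definition Phi :: "real \<Rightarrow> real \<Rightarrow> real \<Rightarrow> real" where
  "Phi r p s = ((1 + r\<^sup>2 - 2*r * s) powr p + (1 + r\<^sup>2 + 2*r * s) powr p) / 2"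

lemma Phi_even: "Phi r p (- s) = Phi r p s"
  by (simp add: Phi_def)

lemma Phi_abs: "Phi r p \<bar>s\<bar> = Phi r p s"
  by (cases "s \<ge> 0") (simp_all add: Phi_even)

lemma Bminus_pos:
  fixes r x :: real
  assumes "0 \<le> r" "r < 1" "x \<le> 1"
  shows "0 < 1 + r\<^sup>2 - 2*r * x"
proof -
  have "2*r * x \<le> 2*r" using assms by (simp add: mult_left_le)
  moreover have "0 < (1 - r)\<^sup>2" using assms by simp
  then have "0 < 1 + r\<^sup>2 - 2*r" by (simp add: power2_eq_square algebra_simps)
  ultimately show ?thesis by linarith
qed

lemma Bplus_pos:
  fixes r x :: real
  assumes "0 \<le> r" "r < 1" "0 \<le> x"
  shows "0 < 1 + r\<^sup>2 + 2*r * x"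
  using assms by (simp add: add_pos_nonneg)

lemma Phi_deriv:
  assumes "0 \<le> r" "r < 1" "0 \<le> x" "x \<le> 1"
  shows "DERIV (Phi r p) x :> p * r * ((1 + r\<^sup>2 + 2*r * x) powr (p - 1) - (1 + r\<^sup>2 - 2*r * x) powr (p - 1))"
proof -
  have m: "0 < 1 + r\<^sup>2 - 2*r * x" by (rule Bminus_pos) (use assms in auto)
  have pl: "0 < 1 + r\<^sup>2 + 2*r * x" by (rule Bplus_pos) (use assms in auto)
  have d1: "DERIV (\<lambda>s. (1 + r\<^sup>2 - 2*r * s) powr p) x :> p * (1 + r\<^sup>2 - 2*r * x) powr (p - 1) * (- 2*r)"
    using DERIV_fun_powr[of "\<lambda>s. 1 + r\<^sup>2 - 2*r * s" "-2*r" x p] m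
    by (auto intro!: derivative_eq_intros)
  have d2: "DERIV (\<lambda>s. (1 + r\<^sup>2 + 2*r * s) powr p) x :> p * (1 + r\<^sup>2 + 2*r * x) powr (p - 1) * (2*r)"
    using DERIV_fun_powr[of "\<lambda>s. 1 + r\<^sup>2 + 2*r * s" "2*r" x p] pl
    by (auto intro!: derivative_eq_intros)
  have "DERIV (\<lambda>s. ((1 + r\<^sup>2 - 2*r * s) powr p + (1 + r\<^sup>2 + 2*r * s) powr p) / 2) x :>
      (p * (1 + r\<^sup>2 - 2*r * x) powr (p - 1) * (- 2*r) + p * (1 + r\<^sup>2 + 2*r * x) powr (p - 1) * (2*r)) / 2"
    by (intro DERIV_cdivide DERIV_add d1 d2)
  then show ?thesis unfolding Phi_def[abs_def]
    by (rule DERIV_cong) (simp add: field_simps)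
qed

lemma Phi_mono_01:
  assumes r: "0 \<le> r" "r < 1" and p: "p \<le> 0 \<or> 1 \<le> p" and ab: "0 \<le> a" "a \<le> b" "b \<le> 1"
  shows "Phi r p a \<le> Phi r p b"
proof (rule DERIV_nonneg_imp_nondecreasing[OF \<open>a \<le> b\<close>])
  fix x assume x: "a \<le> x" "x \<le> b"
  define M where "M = 1 + r\<^sup>2 - 2*r * x"
  define P where "P = 1 + r\<^sup>2 + 2*r * x"
  have m: "0 < M" unfolding M_def by (rule Bminus_pos) (use r x ab in auto)
  have MP: "M \<le> P" unfolding M_def P_def using r x ab by simp
  have "0 \<le> p * r * (P powr (p - 1) - M powr (p - 1))"
    using p
  proof
    assume "p \<le> 0"
    then have "P powr (p - 1) \<le> M powr (p - 1)" by (intro powr_mono2') (use m MP in auto)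
    then show ?thesis using \<open>p \<le> 0\<close> r by (intro mult_nonpos_nonpos) (auto intro: mult_nonpos_nonneg)
  next
    assume "1 \<le> p"
    then have "M powr (p - 1) \<le> P powr (p - 1)" by (intro powr_mono2) (use m MP in auto)
    then show ?thesis using \<open>1 \<le> p\<close> r by simp
  qed
  then show "\<exists>y. DERIV (Phi r p) x :> y \<and> 0 \<le> y"
    using Phi_deriv[of r x p] r x ab unfolding M_def P_def by auto
qed

lemma Phi_anti_01:
  assumes r: "0 \<le> r" "r < 1" and p: "0 \<le> p" "p \<le> 1" and ab: "0 \<le> a" "a \<le> b" "b \<le> 1"
  shows "Phi r p b \<le> Phi r p a"
proof (rule DERIV_nonpos_imp_nonincreasing[OF \<open>a \<le> b\<close>])
  fix x assume x: "a \<le> x" "x \<le> b"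
  define M where "M = 1 + r\<^sup>2 - 2*r * x"
  define P where "P = 1 + r\<^sup>2 + 2*r * x"
  have m: "0 < M" unfolding M_def by (rule Bminus_pos) (use r x ab in auto)
  have MP: "M \<le> P" unfolding M_def P_def using r x ab by simp
  have "P powr (p - 1) \<le> M powr (p - 1)" by (intro powr_mono2') (use m MP p in auto)
  then have "p * r * (P powr (p - 1) - M powr (p - 1)) \<le> 0"
    using p r by (intro mult_nonneg_nonpos) auto
  then show "\<exists>y. DERIV (Phi r p) x :> y \<and> y \<le> 0"
    using Phi_deriv[of r x p] r x ab unfolding M_def P_def by auto
qed

lemma Phi_incr:
  assumes "0 \<le> r" "r < 1" "p \<le> 0 \<or> 1 \<le> p" "\<bar>s\<bar> \<le> 1" "t\<^sup>2 \<le> s\<^sup>2"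
  shows "Phi r p t \<le> Phi r p s"
proof -
  have "\<bar>t\<bar> \<le> \<bar>s\<bar>" using assms(5) by (simp add: abs_le_square_iff)
  then have "Phi r p \<bar>t\<bar> \<le> Phi r p \<bar>s\<bar>"
    by (intro Phi_mono_01) (use assms in auto)
  then show ?thesis by (simp add: Phi_abs)
qed

lemma Phi_decr:
  assumes "0 \<le> r" "r < 1" "0 \<le> p" "p \<le> 1" "\<bar>s\<bar> \<le> 1" "t\<^sup>2 \<le> s\<^sup>2"
  shows "Phi r p s \<le> Phi r p t"
proof -
  have "\<bar>t\<bar> \<le> \<bar>s\<bar>" using assms(6) by (simp add: abs_le_square_iff)
  then have "Phi r p \<bar>s\<bar> \<le> Phi r p \<bar>t\<bar>"
    by (intro Phi_anti_01) (use assms in auto)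
  then show ?thesis by (simp add: Phi_abs)
qed


definition nice :: "('a::euclidean_space \<Rightarrow> real) \<Rightarrow> bool" where
  "nice f \<longleftrightarrow> f \<in> borel_measurable borel \<and> continuous_on (sphere 0 1) f"

lemma nice_bounded:
  assumes "nice f"
  obtains B where "\<And>\<eta>. \<eta> \<in> sphere 0 1 \<Longrightarrow> \<bar>f \<eta>\<bar> \<le> B"
proof -
  have "compact (f ` sphere (0::'a) 1)"
    using assms unfolding nice_def by (intro compact_continuous_image) auto
  then have "bounded (f ` sphere (0::'a) 1)" by (rule compact_imp_bounded)
  then obtain B where "\<forall>y\<in>f ` sphere 0 1. norm y \<le> B" by (auto simp: bounded_iff)
  then have "\<And>\<eta>. \<eta> \<in> sphere 0 1 \<Longrightarrow> \<bar>f \<eta>\<bar> \<le> B" by auto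
  with that show ?thesis by blast
qed

lemma normalize_measurable[measurable]: "(\<lambda>y::'a::euclidean_space. y /\<^sub>R norm y) \<in> borel_measurable borel"
  by measurable

lemma sphere_integrable:
  assumes "nice f"
  shows "set_integrable lborel (ball (0::'a::euclidean_space) 1) (\<lambda>y. f (y /\<^sub>R norm y))"
proof -
  obtain B where B: "\<And>\<eta>. \<eta> \<in> sphere 0 1 \<Longrightarrow> \<bar>f \<eta>\<bar> \<le> B" using nice_bounded[OF assms] by blast
  have mf: "f \<in> borel_measurable borel" using assms by (simp add: nice_def)
  have bnd: "\<bar>f (y /\<^sub>R norm y)\<bar> \<le> max B \<bar>f 0\<bar>" for y :: 'a
  proof (cases "y = 0")
    case False
    then have "y /\<^sub>R norm y \<in> sphere 0 1" by simp
    then show ?thesis using B by fastforce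
  qed simp
  show ?thesis unfolding set_integrable_def
    by (rule integrableI_bounded_set_indicator[where B="max B \<bar>f 0\<bar>"])
       (use mf bnd emeasure_bounded_finite[OF bounded_ball[of "0::'a" 1]] in auto)
qed

lemma sphere_avg_add:
  assumes "nice f" "nice g"
  shows "sphere_avg (\<lambda>\<eta>. f \<eta> + g \<eta>) = sphere_avg f + sphere_avg g"
  unfolding sphere_avg_def
  using set_integral_add(2)[OF sphere_integrable[OF assms(1)] sphere_integrable[OF assms(2)]]
  by (simp add: add_divide_distrib)

lemma sphere_avg_diff:
  assumes "nice f" "nice g"
  shows "sphere_avg (\<lambda>\<eta>. f \<eta> - g \<eta>) = sphere_avg f - sphere_avg g"
  unfolding sphere_avg_def
  using set_integral_diff(2)[OF sphere_integrable[OF assms(1)] sphere_integrable[OF assms(2)]]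
  by (simp add: diff_divide_distrib)

lemma sphere_avg_cmult:
  "sphere_avg (\<lambda>\<eta>. c * f \<eta>) = c * sphere_avg f"
  unfolding sphere_avg_def by simp

lemma sphere_avg_nonneg:
  assumes "\<And>\<eta>. \<eta> \<in> sphere 0 1 \<Longrightarrow> 0 \<le> f \<eta>"
  shows "0 \<le> sphere_avg (f :: 'a::euclidean_space \<Rightarrow> real)"
proof -
  have "AE y in lborel. 0 \<le> indicator (ball (0::'a) 1) y *\<^sub>R f (y /\<^sub>R norm y)"
    using AE_lborel_singleton[of "0::'a"]
  proof eventually_elim
    case (elim y)
    then have "y /\<^sub>R norm y \<in> sphere 0 1" by simp
    then show ?case using assms by (simp add: indicator_def)
  qed
  then have "0 \<le> (LINT y : ball (0::'a) 1 | lborel. f (y /\<^sub>R norm y))"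
    unfolding set_lebesgue_integral_def by (rule integral_nonneg_AE)
  then show ?thesis unfolding sphere_avg_def by simp
qed

lemma sphere_avg_mono:
  assumes "nice f" "nice g" "\<And>\<eta>. \<eta> \<in> sphere 0 1 \<Longrightarrow> f \<eta> \<le> g \<eta>"
  shows "sphere_avg f \<le> sphere_avg g"
proof -
  have "0 \<le> sphere_avg (\<lambda>\<eta>. g \<eta> - f \<eta>)" by (rule sphere_avg_nonneg) (use assms in auto)
  then show ?thesis using sphere_avg_diff[OF assms(2,1)] by simp
qed

lemma sphere_avg_cong:
  assumes "nice f" "nice g" "\<And>\<eta>. \<eta> \<in> sphere 0 1 \<Longrightarrow> f \<eta> = g \<eta>"
  shows "sphere_avg f = sphere_avg g"
  using sphere_avg_mono[OF assms(1,2)] sphere_avg_mono[OF assms(2,1)] assms(3)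
  by (simp add: order_antisym)

lemma sphere_avg_orth:
  fixes T :: "'a::euclidean_space \<Rightarrow> 'a"
  assumes T: "orthogonal_transformation T" and mf: "f \<in> borel_measurable borel"
  shows "sphere_avg (\<lambda>\<eta>. f (T \<eta>)) = sphere_avg f"
proof -
  define H where "H z = indicator (ball (0::'a) 1) z *\<^sub>R f (z /\<^sub>R norm z)" for z
  note mf[measurable]
  have [measurable]: "ball (0::'a) 1 \<in> sets borel" by simp
  have mH: "H \<in> borel_measurable borel" unfolding H_def by measurable
  have lin: "linear T" using T by (rule orthogonal_transformation_linear)
  have mT: "T \<in> borel_measurable borel"
    by (intro borel_measurable_continuous_onI linear_continuous_on)
       (simp add: lin linear_conv_bounded_linear[symmetric])
  have nT: "norm (T y) = norm y" for y using T by (simp add: orthogonal_transformation_norm)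
  have eq: "indicator (ball (0::'a) 1) y *\<^sub>R f (T (y /\<^sub>R norm y)) = H (T y)" for y
    unfolding H_def by (simp add: nT orthogonal_transformation_scaleR[OF T] indicator_def)
  have "(LINT y : ball (0::'a) 1 | lborel. f (T (y /\<^sub>R norm y))) = integral\<^sup>L lborel (\<lambda>y. H (T y))"
    unfolding set_lebesgue_integral_def by (simp only: eq)
  also have "\<dots> = integral\<^sup>L (distr lborel borel T) H"
    by (rule integral_distr[symmetric]) (use mT mH in simp_all)
  also have "\<dots> = integral\<^sup>L lborel H" by (simp add: distr_orth[OF T])
  also have "\<dots> = (LINT y : ball (0::'a) 1 | lborel. f (y /\<^sub>R norm y))"
    unfolding set_lebesgue_integral_def H_def by simp
  finally show ?thesis unfolding sphere_avg_def by simp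
qed



lemma nice_mult: "nice f \<Longrightarrow> nice g \<Longrightarrow> nice (\<lambda>\<eta>. f \<eta> * g \<eta>)"
  unfolding nice_def by (auto intro: continuous_intros)

lemma nice_add: "nice f \<Longrightarrow> nice g \<Longrightarrow> nice (\<lambda>\<eta>. f \<eta> + g \<eta>)"
  unfolding nice_def by (auto intro: continuous_intros)

lemma nice_diff: "nice f \<Longrightarrow> nice g \<Longrightarrow> nice (\<lambda>\<eta>. f \<eta> - g \<eta>)"
  unfolding nice_def by (auto intro: continuous_intros)

lemma nice_cdiv: "nice f \<Longrightarrow> nice (\<lambda>\<eta>. f \<eta> / c)"
  unfolding nice_def divide_inverse by (auto intro: continuous_intros)

lemma orth_measurable: "orthogonal_transformation (T::'a::euclidean_space \<Rightarrow> 'a) \<Longrightarrow> T \<in> borel_measurable borel"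
  by (intro borel_measurable_continuous_onI linear_continuous_on)
     (simp add: orthogonal_transformation_linear linear_conv_bounded_linear[symmetric])

lemma orth_continuous: "orthogonal_transformation (T::'a::euclidean_space \<Rightarrow> 'a) \<Longrightarrow> continuous_on S T"
  by (intro linear_continuous_on)
     (simp add: orthogonal_transformation_linear linear_conv_bounded_linear[symmetric])

lemma nice_orth:
  fixes T :: "'a::euclidean_space \<Rightarrow> 'a"
  assumes T: "orthogonal_transformation T" and f: "nice f"
  shows "nice (\<lambda>\<eta>. f (T \<eta>))"
  unfolding nice_def
proof
  show "(\<lambda>\<eta>. f (T \<eta>)) \<in> borel_measurable borel"
    using f orth_measurable[OF T] unfolding nice_def by (simp add: measurable_compose)
  have "T ` sphere 0 1 \<subseteq> sphere 0 1"
    using T by (auto simp: orthogonal_transformation_norm)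
  then show "continuous_on (sphere 0 1) (\<lambda>\<eta>. f (T \<eta>))"
    using f unfolding nice_def
    by (intro continuous_on_compose2[OF _ orth_continuous[OF T]]) auto
qed

lemma nice_G:
  fixes x :: "'a::euclidean_space"
  assumes "norm x < 1"
  shows "nice (\<lambda>\<eta>. norm (\<eta> - x) powr e)"
  unfolding nice_def
proof
  show "(\<lambda>\<eta>. norm (\<eta> - x) powr e) \<in> borel_measurable borel" by measurable
  have "norm (\<eta> - x) \<noteq> 0" if "\<eta> \<in> sphere 0 1" for \<eta>
    using that assms by auto
  then show "continuous_on (sphere 0 1) (\<lambda>\<eta>. norm (\<eta> - x) powr e)"
    by (intro continuous_intros) auto
qed

lemma nice_K:
  fixes l :: "'a::euclidean_space"
  assumes "0 < q"
  shows "nice (\<lambda>\<eta>. \<bar>\<eta> \<bullet> l\<bar> powr q)"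
  unfolding nice_def
proof
  show "(\<lambda>\<eta>. \<bar>\<eta> \<bullet> l\<bar> powr q) \<in> borel_measurable borel" by measurable
  show "continuous_on (sphere 0 1) (\<lambda>\<eta>. \<bar>\<eta> \<bullet> l\<bar> powr q)"
    by (intro continuous_on_powr' continuous_intros) (use assms in auto)
qed

definition hh :: "'a::euclidean_space \<Rightarrow> 'a \<Rightarrow> 'a" where
  "hh w v = v - (2 * (v \<bullet> w) / (w \<bullet> w)) *\<^sub>R w"

lemma hh_inner: "hh w v \<bullet> hh w z = v \<bullet> z"
proof (cases "w \<bullet> w = 0")
  case True
  then show ?thesis by (simp add: hh_def)
next
  case False
  then show ?thesis
    by (simp add: hh_def inner_diff_left inner_diff_right inner_commute field_simps)
qed

lemma hh_linear: "linear (hh w)"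
  by (rule linearI) (simp_all add: hh_def inner_add_left algebra_simps add_divide_distrib scaleR_add_left)

lemma hh_orth: "orthogonal_transformation (hh w)"
  unfolding orthogonal_transformation_def using hh_linear hh_inner by blast

lemma hh_adj: "hh w v \<bullet> z = v \<bullet> hh w z"
  by (simp add: hh_def inner_diff_left inner_diff_right inner_commute algebra_simps)

lemma hh_fix: "v \<bullet> w = 0 \<Longrightarrow> hh w v = v"
  by (simp add: hh_def)

lemma hh_swap:
  assumes "norm a = norm b"
  shows "hh (a - b) a = b"
proof (cases "a = b")
  case True
  then show ?thesis by (simp add: hh_def)
next
  case False
  have ab: "a \<bullet> a = b \<bullet> b" using assms by (simp add: dot_square_norm)
  have ne: "(a - b) \<bullet> (a - b) \<noteq> 0" using False by simp
  have "(a - b) \<bullet> (a - b) = 2 * (a \<bullet> (a - b))"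
    using ab by (simp add: inner_diff_left inner_diff_right inner_commute)
  then have c1: "2 * (a \<bullet> (a - b)) / ((a - b) \<bullet> (a - b)) = 1" using ne by (metis divide_self)
  show ?thesis unfolding hh_def c1 by simp
qed

lemma hh_invol: "hh w (hh w v) = v"
proof (cases "w \<bullet> w = 0")
  case True
  then show ?thesis by (simp add: hh_def)
next
  case False
  then show ?thesis
    by (simp add: hh_def inner_diff_left field_simps scaleR_diff_left)
qed

definition J :: "real \<Rightarrow> real \<Rightarrow> 'a::euclidean_space \<Rightarrow> 'a \<Rightarrow> real" where
  "J e q x l = sphere_avg (\<lambda>\<eta>. norm (\<eta> - x) powr e * \<bar>\<eta> \<bullet> l\<bar> powr q)"

lemma I_int_J: "I_int \<alpha> q x l = J ((real DIM('a) - \<alpha>) * q - 2 * real DIM('a) + 2) q (x::'a::euclidean_space) l"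
  by (simp add: I_int_def J_def)

lemma J_orth:
  fixes T :: "'a::euclidean_space \<Rightarrow> 'a"
  assumes T: "orthogonal_transformation T"
  shows "J e q (T x) (T l) = J e q x l"
proof -
  have "sphere_avg (\<lambda>\<eta>. (\<lambda>\<zeta>. norm (\<zeta> - T x) powr e * \<bar>\<zeta> \<bullet> T l\<bar> powr q) (T \<eta>))
      = sphere_avg (\<lambda>\<zeta>. norm (\<zeta> - T x) powr e * \<bar>\<zeta> \<bullet> T l\<bar> powr q)"
    by (rule sphere_avg_orth[OF T]) measurable
  moreover have "(\<lambda>\<eta>. (\<lambda>\<zeta>. norm (\<zeta> - T x) powr e * \<bar>\<zeta> \<bullet> T l\<bar> powr q) (T \<eta>))
      = (\<lambda>\<eta>. norm (\<eta> - x) powr e * \<bar>\<eta> \<bullet> l\<bar> powr q)"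
  proof
    fix \<eta>
    have "T \<eta> - T x = T (\<eta> - x)"
      using T by (simp add: orthogonal_transformation_linear linear_diff)
    then show "(\<lambda>\<zeta>. norm (\<zeta> - T x) powr e * \<bar>\<zeta> \<bullet> T l\<bar> powr q) (T \<eta>)
      = norm (\<eta> - x) powr e * \<bar>\<eta> \<bullet> l\<bar> powr q"
      using T by (simp add: orthogonal_transformation_norm orthogonal_transformation_def)
  qed
  ultimately show ?thesis unfolding J_def by simp
qed

lemma J_neg: "J e q x (- l) = J e q x l"
  by (simp add: J_def)

definition Aa :: "real \<Rightarrow> 'a::euclidean_space \<Rightarrow> 'a \<Rightarrow> real" where
  "Aa e x \<eta> = (norm (\<eta> - x) powr e + norm (\<eta> + x) powr e) / 2"

lemma nice_Aa: "norm x < 1 \<Longrightarrow> nice (Aa e x)"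
proof -
  assume x: "norm x < 1"
  have "nice (\<lambda>\<eta>. norm (\<eta> - (- x)) powr e)" by (rule nice_G) (use x in simp)
  then have "nice (\<lambda>\<eta>. norm (\<eta> + x) powr e)" by simp
  then show ?thesis unfolding Aa_def[abs_def]
    by (intro nice_cdiv nice_add nice_G x)
qed

lemma J_sym:
  assumes x: "norm x < 1" and q: "0 < q"
  shows "J e q x l = sphere_avg (\<lambda>\<eta>. Aa e x \<eta> * \<bar>\<eta> \<bullet> l\<bar> powr q)"
proof -
  have o: "orthogonal_transformation (\<lambda>v::'a. - v)"
    using orthogonal_transformation_neg[of "\<lambda>v. v"] by simp
  have n1: "nice (\<lambda>\<eta>. norm (\<eta> - x) powr e * \<bar>\<eta> \<bullet> l\<bar> powr q)"
    by (intro nice_mult nice_G nice_K x q)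
  have "nice (\<lambda>\<eta>. norm (\<eta> - (-x)) powr e * \<bar>\<eta> \<bullet> l\<bar> powr q)"
    by (intro nice_mult nice_G nice_K q) (use x in simp)
  then have n2: "nice (\<lambda>\<eta>. norm (\<eta> + x) powr e * \<bar>\<eta> \<bullet> l\<bar> powr q)" by simp
  have "sphere_avg (\<lambda>\<eta>. (\<lambda>\<zeta>. norm (\<zeta> + x) powr e * \<bar>\<zeta> \<bullet> l\<bar> powr q) (- \<eta>))
      = sphere_avg (\<lambda>\<zeta>. norm (\<zeta> + x) powr e * \<bar>\<zeta> \<bullet> l\<bar> powr q)"
    by (rule sphere_avg_orth[OF o]) measurable
  moreover have "(\<lambda>\<eta>. (\<lambda>\<zeta>. norm (\<zeta> + x) powr e * \<bar>\<zeta> \<bullet> l\<bar> powr q) (- \<eta>))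
      = (\<lambda>\<eta>. norm (\<eta> - x) powr e * \<bar>\<eta> \<bullet> l\<bar> powr q)"
    by (simp add: fun_eq_iff norm_minus_commute)
  ultimately have eq: "sphere_avg (\<lambda>\<eta>. norm (\<eta> - x) powr e * \<bar>\<eta> \<bullet> l\<bar> powr q)
      = sphere_avg (\<lambda>\<eta>. norm (\<eta> + x) powr e * \<bar>\<eta> \<bullet> l\<bar> powr q)" by simp
  have "sphere_avg (\<lambda>\<eta>. Aa e x \<eta> * \<bar>\<eta> \<bullet> l\<bar> powr q) = sphere_avg (\<lambda>\<eta>. (1/2) * (norm (\<eta> - x) powr e * \<bar>\<eta> \<bullet> l\<bar> powr q + norm (\<eta> + x) powr e * \<bar>\<eta> \<bullet> l\<bar> powr q))"
    by (rule arg_cong[where f=sphere_avg]) (simp add: fun_eq_iff Aa_def field_simps)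
  also have "\<dots> = (1/2) * sphere_avg (\<lambda>\<eta>. norm (\<eta> - x) powr e * \<bar>\<eta> \<bullet> l\<bar> powr q + norm (\<eta> + x) powr e * \<bar>\<eta> \<bullet> l\<bar> powr q)"
    by (rule sphere_avg_cmult)
  also have "\<dots> = (1/2) * (sphere_avg (\<lambda>\<eta>. norm (\<eta> - x) powr e * \<bar>\<eta> \<bullet> l\<bar> powr q) + sphere_avg (\<lambda>\<eta>. norm (\<eta> + x) powr e * \<bar>\<eta> \<bullet> l\<bar> powr q))"
    by (simp only: sphere_avg_add[OF n1 n2])
  finally show ?thesis unfolding J_def eq by simp
qed



lemma hh_neg: "hh (- w) = hh w"
  by (simp add: hh_def fun_eq_iff)

lemma real_pointwise:
  fixes a b c d \<alpha> \<gamma> q :: real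
  assumes ab: "a = \<alpha> * c + \<gamma> * d" "b = \<alpha> * d + \<gamma> * c" and g: "\<gamma>\<^sup>2 \<le> \<alpha>\<^sup>2"
    and a1: "\<bar>a\<bar> \<le> 1" and b1: "\<bar>b\<bar> \<le> 1" and q: "0 \<le> q"
    and mon: "\<And>s t. \<bar>s\<bar> \<le> 1 \<Longrightarrow> \<bar>t\<bar> \<le> 1 \<Longrightarrow> t\<^sup>2 \<le> s\<^sup>2 \<Longrightarrow> Ph t \<le> Ph s"
  shows "0 \<le> (Ph a - Ph b) * (\<bar>c\<bar> powr q - \<bar>d\<bar> powr q)"
proof -
  have key: "a\<^sup>2 - b\<^sup>2 = (\<alpha>\<^sup>2 - \<gamma>\<^sup>2) * (c\<^sup>2 - d\<^sup>2)"
    unfolding ab by (simp add: power2_eq_square algebra_simps)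
  show ?thesis
  proof (cases "d\<^sup>2 \<le> c\<^sup>2")
    case True
    then have "0 \<le> a\<^sup>2 - b\<^sup>2" unfolding key using g by (intro mult_nonneg_nonneg) auto
    then have "Ph b \<le> Ph a" by (intro mon a1 b1) simp
    moreover have "\<bar>d\<bar> powr q \<le> \<bar>c\<bar> powr q"
      using True q by (intro powr_mono2) (auto simp: abs_le_square_iff)
    ultimately show ?thesis by (intro mult_nonneg_nonneg) auto
  next
    case False
    then have "a\<^sup>2 - b\<^sup>2 \<le> 0" unfolding key using g by (intro mult_nonneg_nonpos) auto
    then have "Ph a \<le> Ph b" by (intro mon a1 b1) simp
    moreover have "\<bar>c\<bar> powr q \<le> \<bar>d\<bar> powr q"
      using False q by (intro powr_mono2) (auto simp: abs_le_square_iff)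
    ultimately show ?thesis by (intro mult_nonpos_nonpos) auto
  qed
qed

lemma J_diff:
  fixes x l1 l2 :: "'a::euclidean_space"
  assumes x: "norm x < 1" and q: "0 < q" and l: "norm l1 = norm l2"
  shows "2 * (J e q x l1 - J e q x l2) = sphere_avg (\<lambda>\<eta>. (Aa e x \<eta> - Aa e x (hh (l1 - l2) \<eta>)) * (\<bar>\<eta> \<bullet> l1\<bar> powr q - \<bar>\<eta> \<bullet> l2\<bar> powr q))"
proof -
  define R where "R = hh (l1 - l2)"
  have oR: "orthogonal_transformation R" unfolding R_def by (rule hh_orth)
  have R1: "R l1 = l2" unfolding R_def by (rule hh_swap[OF l])
  have R2: "R l2 = l1" unfolding R_def
    using hh_swap[of l2 l1] l by (metis hh_neg minus_diff_eq)
  have adj: "R \<eta> \<bullet> v = \<eta> \<bullet> R v" for \<eta> v unfolding R_def by (rule hh_adj)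
  define A where "A = Aa e x"
  define K1 where "K1 \<eta> = \<bar>\<eta> \<bullet> l1\<bar> powr q" for \<eta> :: 'a
  define K2 where "K2 \<eta> = \<bar>\<eta> \<bullet> l2\<bar> powr q" for \<eta> :: 'a
  have nA: "nice A" unfolding A_def by (rule nice_Aa[OF x])
  have nAR: "nice (\<lambda>\<eta>. A (R \<eta>))" by (rule nice_orth[OF oR nA])
  have nK1: "nice K1" unfolding K1_def[abs_def] by (rule nice_K[OF q])
  have nK2: "nice K2" unfolding K2_def[abs_def] by (rule nice_K[OF q])
  have n1: "nice (\<lambda>\<eta>. A \<eta> * K1 \<eta>)" by (intro nice_mult nA nK1)
  have n2: "nice (\<lambda>\<eta>. A \<eta> * K2 \<eta>)" by (intro nice_mult nA nK2)
  have n3: "nice (\<lambda>\<eta>. A (R \<eta>) * K1 \<eta>)" by (intro nice_mult nAR nK1)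
  have n4: "nice (\<lambda>\<eta>. A (R \<eta>) * K2 \<eta>)" by (intro nice_mult nAR nK2)
  have J1: "J e q x l1 = sphere_avg (\<lambda>\<eta>. A \<eta> * K1 \<eta>)"
    unfolding A_def K1_def by (rule J_sym[OF x q])
  have J2: "J e q x l2 = sphere_avg (\<lambda>\<eta>. A \<eta> * K2 \<eta>)"
    unfolding A_def K2_def by (rule J_sym[OF x q])
  have K2R: "K2 (R \<eta>) = K1 \<eta>" for \<eta> unfolding K1_def K2_def by (simp add: adj R2)
  have K1R: "K1 (R \<eta>) = K2 \<eta>" for \<eta> unfolding K1_def K2_def by (simp add: adj R1)
  have a: "sphere_avg (\<lambda>\<eta>. A \<eta> * K2 \<eta>) = sphere_avg (\<lambda>\<eta>. A (R \<eta>) * K1 \<eta>)"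
    using sphere_avg_orth[OF oR, of "\<lambda>\<eta>. A \<eta> * K2 \<eta>"] n2 by (simp add: nice_def K2R)
  have b: "sphere_avg (\<lambda>\<eta>. A \<eta> * K1 \<eta>) = sphere_avg (\<lambda>\<eta>. A (R \<eta>) * K2 \<eta>)"
    using sphere_avg_orth[OF oR, of "\<lambda>\<eta>. A \<eta> * K1 \<eta>"] n1 by (simp add: nice_def K1R)
  have "2 * (J e q x l1 - J e q x l2)
      = (sphere_avg (\<lambda>\<eta>. A \<eta> * K1 \<eta>) - sphere_avg (\<lambda>\<eta>. A (R \<eta>) * K1 \<eta>))
        + (sphere_avg (\<lambda>\<eta>. A (R \<eta>) * K2 \<eta>) - sphere_avg (\<lambda>\<eta>. A \<eta> * K2 \<eta>))"
    unfolding J1 J2 using a b by simp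
  also have "\<dots> = sphere_avg (\<lambda>\<eta>. A \<eta> * K1 \<eta> - A (R \<eta>) * K1 \<eta>)
        + sphere_avg (\<lambda>\<eta>. A (R \<eta>) * K2 \<eta> - A \<eta> * K2 \<eta>)"
    by (simp only: sphere_avg_diff[OF n1 n3] sphere_avg_diff[OF n4 n2])
  also have "\<dots> = sphere_avg (\<lambda>\<eta>. (A \<eta> * K1 \<eta> - A (R \<eta>) * K1 \<eta>) + (A (R \<eta>) * K2 \<eta> - A \<eta> * K2 \<eta>))"
    by (rule sphere_avg_add[symmetric]) (intro nice_diff n1 n2 n3 n4)+
  also have "\<dots> = sphere_avg (\<lambda>\<eta>. (A \<eta> - A (R \<eta>)) * (K1 \<eta> - K2 \<eta>))"
    by (rule arg_cong[where f=sphere_avg]) (simp add: fun_eq_iff algebra_simps)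
  finally show ?thesis unfolding A_def K1_def K2_def R_def .
qed

lemma Aa_Phi:
  fixes x u \<eta> :: "'a::euclidean_space"
  assumes x: "norm x < 1" and u: "norm u = 1" and xu: "x = norm x *\<^sub>R u" and \<eta>: "norm \<eta> = 1"
  shows "Aa e x \<eta> = Phi (norm x) (e/2) (\<eta> \<bullet> u)"
proof -
  define r where "r = norm x"
  have sq: "norm (\<eta> - s *\<^sub>R u) ^ 2 = 1 + s\<^sup>2 - 2 * s * (\<eta> \<bullet> u)" for s
  proof -
    have "norm (\<eta> - s *\<^sub>R u) ^ 2 = (\<eta> - s *\<^sub>R u) \<bullet> (\<eta> - s *\<^sub>R u)" by (simp add: power2_norm_eq_inner)
    also have "\<dots> = \<eta> \<bullet> \<eta> - 2 * s * (\<eta> \<bullet> u) + s\<^sup>2 * (u \<bullet> u)"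
      by (simp add: inner_diff_left inner_diff_right inner_commute power2_eq_square algebra_simps)
    also have "\<dots> = 1 + s\<^sup>2 - 2 * s * (\<eta> \<bullet> u)"
      using u \<eta> by (simp add: dot_square_norm)
    finally show ?thesis .
  qed
  have pw: "norm v powr e = (norm v ^ 2) powr (e/2)" if "v \<noteq> 0" for v :: 'a
  proof -
    have "norm v ^ 2 = norm v powr 2" using that by (simp add: powr_numeral)
    then have "(norm v ^ 2) powr (e/2) = norm v powr (2 * (e/2))" by (simp only: powr_powr)
    then show ?thesis by simp
  qed
  have ne1: "\<eta> - x \<noteq> 0" using x \<eta> by auto
  have ne2: "\<eta> + x \<noteq> 0"
  proof
    assume "\<eta> + x = 0"
    then have "\<eta> = - x" by (simp add: add_eq_0_iff)
    then show False using x \<eta> by simp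
  qed
  have x1: "\<eta> - x = \<eta> - r *\<^sub>R u" unfolding r_def using xu by (rule arg_cong)
  have x2: "\<eta> + x = \<eta> - (- r) *\<^sub>R u"
  proof -
    have "\<eta> + x = \<eta> + r *\<^sub>R u" unfolding r_def using xu by (rule arg_cong)
    then show ?thesis by simp
  qed
  have e1: "norm (\<eta> - x) powr e = (1 + r\<^sup>2 - 2 * r * (\<eta> \<bullet> u)) powr (e/2)"
    using pw[OF ne1] sq[of r] unfolding x1 by simp
  have e2: "norm (\<eta> + x) powr e = (1 + r\<^sup>2 + 2 * r * (\<eta> \<bullet> u)) powr (e/2)"
    using pw[OF ne2] sq[of "-r"] unfolding x2 by simp
  show ?thesis unfolding Aa_def Phi_def e1 e2 r_def by simp
qed

lemma J_compare_gen:
  fixes x u l1 l2 :: "'a::euclidean_space"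
  assumes x: "norm x < 1" and q: "0 < q" and u: "norm u = 1" and xu: "x = norm x *\<^sub>R u"
    and l1: "norm l1 = 1" and l2: "norm l2 = 1"
    and dec: "u = \<alpha> *\<^sub>R l1 + \<gamma> *\<^sub>R l2" and g: "\<gamma>\<^sup>2 \<le> \<alpha>\<^sup>2"
    and mon: "\<And>s t. \<bar>s\<bar> \<le> 1 \<Longrightarrow> \<bar>t\<bar> \<le> 1 \<Longrightarrow> t\<^sup>2 \<le> s\<^sup>2 \<Longrightarrow> Ph t \<le> Ph s"
    and Ph: "\<And>s. Ph s = \<sigma> * Phi (norm x) (e/2) s" and \<sigma>: "\<sigma> = 1 \<or> \<sigma> = -1"
  shows "0 \<le> \<sigma> * (J e q x l1 - J e q x l2)"
proof -
  define R where "R = hh (l1 - l2)"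
  have oR: "orthogonal_transformation R" unfolding R_def by (rule hh_orth)
  have R1: "R l1 = l2" unfolding R_def by (rule hh_swap) (simp add: l1 l2)
  have R2: "R l2 = l1" unfolding R_def
    using hh_swap[of l2 l1] l1 l2 by (metis hh_neg minus_diff_eq)
  have adj: "R \<eta> \<bullet> v = \<eta> \<bullet> R v" for \<eta> v unfolding R_def by (rule hh_adj)
  have Ru: "R u = \<alpha> *\<^sub>R l2 + \<gamma> *\<^sub>R l1"
    using oR unfolding dec by (simp add: orthogonal_transformation_linear linear_add linear_scale R1 R2)
  have nRu: "norm (R u) = 1" using oR u by (simp add: orthogonal_transformation_norm)
  have pt: "0 \<le> \<sigma> * ((Aa e x \<eta> - Aa e x (R \<eta>)) * (\<bar>\<eta> \<bullet> l1\<bar> powr q - \<bar>\<eta> \<bullet> l2\<bar> powr q))"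
    if \<eta>: "\<eta> \<in> sphere 0 1" for \<eta>
  proof -
    have n\<eta>: "norm \<eta> = 1" using \<eta> by simp
    have nR\<eta>: "norm (R \<eta>) = 1" using oR n\<eta> by (simp add: orthogonal_transformation_norm)
    have A1: "Aa e x \<eta> = Phi (norm x) (e/2) (\<eta> \<bullet> u)" by (rule Aa_Phi[OF x u xu n\<eta>])
    have A2: "Aa e x (R \<eta>) = Phi (norm x) (e/2) (\<eta> \<bullet> R u)"
      using Aa_Phi[OF x u xu nR\<eta>] by (simp add: adj)
    have a1: "\<bar>\<eta> \<bullet> u\<bar> \<le> 1" using Cauchy_Schwarz_ineq2[of \<eta> u] n\<eta> u by simp
    have b1: "\<bar>\<eta> \<bullet> R u\<bar> \<le> 1" using Cauchy_Schwarz_ineq2[of \<eta> "R u"] n\<eta> nRu by simp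
    have i1: "\<eta> \<bullet> R u = \<alpha> * (\<eta> \<bullet> l2) + \<gamma> * (\<eta> \<bullet> l1)" by (simp add: Ru inner_add_right)
    have i2: "\<eta> \<bullet> u = \<alpha> * (\<eta> \<bullet> l1) + \<gamma> * (\<eta> \<bullet> l2)" by (simp add: dec inner_add_right)
    have "0 \<le> (Ph (\<eta> \<bullet> u) - Ph (\<eta> \<bullet> R u)) * (\<bar>\<eta> \<bullet> l1\<bar> powr q - \<bar>\<eta> \<bullet> l2\<bar> powr q)"
      by (rule real_pointwise[where \<alpha>=\<alpha> and \<gamma>=\<gamma>, OF i2 i1 g a1 b1 _ mon]) (use q in simp)
    then show ?thesis unfolding A1 A2 Ph by (simp add: algebra_simps)
  qed
  have n: "nice (\<lambda>\<eta>. (Aa e x \<eta> - Aa e x (R \<eta>)) * (\<bar>\<eta> \<bullet> l1\<bar> powr q - \<bar>\<eta> \<bullet> l2\<bar> powr q))"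
    by (intro nice_mult nice_diff nice_K q nice_Aa x nice_orth[OF oR])
  have jd: "2 * (J e q x l1 - J e q x l2) = sphere_avg (\<lambda>\<eta>. (Aa e x \<eta> - Aa e x (hh (l1 - l2) \<eta>)) * (\<bar>\<eta> \<bullet> l1\<bar> powr q - \<bar>\<eta> \<bullet> l2\<bar> powr q))"
    by (rule J_diff[OF x q]) (simp add: l1 l2)
  have "0 \<le> sphere_avg (\<lambda>\<eta>. \<sigma> * ((Aa e x \<eta> - Aa e x (R \<eta>)) * (\<bar>\<eta> \<bullet> l1\<bar> powr q - \<bar>\<eta> \<bullet> l2\<bar> powr q)))"
    by (rule sphere_avg_nonneg) (rule pt)
  also have "\<dots> = \<sigma> * (2 * (J e q x l1 - J e q x l2))"
    unfolding sphere_avg_cmult jd R_def ..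
  finally have h: "0 \<le> \<sigma> * (2 * (J e q x l1 - J e q x l2))" .
  then show ?thesis using \<sigma> by auto
qed



lemma nice_const: "nice (\<lambda>\<eta>. c)"
  unfolding nice_def by (auto intro: continuous_intros)

lemma J_cmp_incr:
  fixes x u l1 l2 :: "'a::euclidean_space"
  assumes x: "norm x < 1" and q: "0 < q" and u: "norm u = 1" and xu: "x = norm x *\<^sub>R u"
    and l1: "norm l1 = 1" and l2: "norm l2 = 1"
    and dec: "u = \<alpha> *\<^sub>R l1 + \<gamma> *\<^sub>R l2" and g: "\<gamma>\<^sup>2 \<le> \<alpha>\<^sup>2"
    and p: "e/2 \<le> 0 \<or> 1 \<le> e/2"
  shows "J e q x l2 \<le> J e q x l1"
proof -
  have "0 \<le> 1 * (J e q x l1 - J e q x l2)"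
    by (rule J_compare_gen[OF x q u xu l1 l2 dec g, where Ph="Phi (norm x) (e/2)"])
       (use Phi_incr[of "norm x" "e/2"] x p in auto)
  then show ?thesis by simp
qed

lemma J_cmp_decr:
  fixes x u l1 l2 :: "'a::euclidean_space"
  assumes x: "norm x < 1" and q: "0 < q" and u: "norm u = 1" and xu: "x = norm x *\<^sub>R u"
    and l1: "norm l1 = 1" and l2: "norm l2 = 1"
    and dec: "u = \<alpha> *\<^sub>R l1 + \<gamma> *\<^sub>R l2" and g: "\<gamma>\<^sup>2 \<le> \<alpha>\<^sup>2"
    and p: "0 \<le> e/2" "e/2 \<le> 1"
  shows "J e q x l1 \<le> J e q x l2"
proof -
  have "0 \<le> (-1) * (J e q x l1 - J e q x l2)"
    by (rule J_compare_gen[OF x q u xu l1 l2 dec g, where Ph="\<lambda>s. - Phi (norm x) (e/2) s"])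
       (use Phi_decr[of "norm x" "e/2"] x p in auto)
  then show ?thesis by simp
qed

lemma ex_dir:
  fixes x e1 :: "'a::euclidean_space"
  assumes "norm e1 = 1"
  obtains u where "norm u = 1" "x = norm x *\<^sub>R u"
proof (cases "x = 0")
  case True
  then show ?thesis using that[of e1] assms by simp
next
  case False
  then show ?thesis using that[of "x /\<^sub>R norm x"] by simp
qed

lemma J_perp:
  fixes x u m m' :: "'a::euclidean_space"
  assumes xu: "x = norm x *\<^sub>R u" and m: "m \<bullet> u = 0" and m': "m' \<bullet> u = 0"
    and nm: "norm m = norm m'"
  shows "J e q x m = J e q x m'"
proof -
  define R where "R = hh (m - m')"
  have "x \<bullet> (m - m') = 0"
    by (subst xu) (simp add: inner_diff_right m m' inner_commute)
  then have Rx: "R x = x" unfolding R_def by (rule hh_fix)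
  have Rm: "R m = m'" unfolding R_def by (rule hh_swap[OF nm])
  have "J e q (R x) (R m) = J e q x m" unfolding R_def by (rule J_orth[OF hh_orth])
  then show ?thesis by (simp add: Rx Rm)
qed

lemma J_sup_incr:
  fixes x e1 :: "'a::euclidean_space"
  assumes x: "norm x < 1" and q: "0 < q" and e1: "norm e1 = 1" and p: "e/2 \<le> 0 \<or> 1 \<le> e/2"
  shows "\<forall>l\<in>sphere 0 1. J e q x l \<le> J e q (norm x *\<^sub>R e1) e1"
    and "\<exists>l\<in>sphere 0 1. J e q x l = J e q (norm x *\<^sub>R e1) e1"
proof -
  obtain u where u: "norm u = 1" and xu: "x = norm x *\<^sub>R u" using ex_dir[OF e1] by blast
  define H where "H = hh (u - e1)"
  have Hu: "H u = e1" unfolding H_def by (rule hh_swap) (simp add: u e1)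
  have Hx: "H x = norm x *\<^sub>R e1"
    using hh_linear[of "u - e1"] unfolding H_def[symmetric]
    by (subst xu) (simp add: linear_scale Hu)
  have eq: "J e q x u = J e q (norm x *\<^sub>R e1) e1"
    using J_orth[OF hh_orth[of "u - e1"], where x=x and l=u and e=e and q=q] unfolding H_def[symmetric] Hx Hu by simp
  show "\<forall>l\<in>sphere 0 1. J e q x l \<le> J e q (norm x *\<^sub>R e1) e1"
  proof
    fix l :: 'a assume "l \<in> sphere 0 1"
    then have l: "norm l = 1" by simp
    have "J e q x l \<le> J e q x u"
      by (rule J_cmp_incr[OF x q u xu u l, where \<alpha>=1 and \<gamma>=0]) (use p in simp_all)
    then show "J e q x l \<le> J e q (norm x *\<^sub>R e1) e1" by (simp add: eq)
  qed
  show "\<exists>l\<in>sphere 0 1. J e q x l = J e q (norm x *\<^sub>R e1) e1"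
    using eq u by auto
qed

lemma J_sup_decr:
  fixes x e1 e2 :: "'a::euclidean_space"
  assumes x: "norm x < 1" and q: "0 < q" and e1: "norm e1 = 1" and e2: "norm e2 = 1"
    and e12: "e1 \<bullet> e2 = 0" and p: "0 \<le> e/2" "e/2 \<le> 1"
  shows "\<forall>l\<in>sphere 0 1. J e q x l \<le> J e q (norm x *\<^sub>R e1) e2"
    and "\<exists>l\<in>sphere 0 1. J e q x l = J e q (norm x *\<^sub>R e1) e2"
proof -
  obtain u where u: "norm u = 1" and xu: "x = norm x *\<^sub>R u" using ex_dir[OF e1] by blast
  define H where "H = hh (u - e1)"
  have Hu: "H u = e1" unfolding H_def by (rule hh_swap) (simp add: u e1)
  have He1: "H e1 = u" unfolding H_def
    using hh_swap[of e1 u] u e1 by (metis hh_neg minus_diff_eq)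
  have Hx: "H x = norm x *\<^sub>R e1"
    using hh_linear[of "u - e1"] unfolding H_def[symmetric]
    by (subst xu) (simp add: linear_scale Hu)
  define ls where "ls = H e2"
  have nls: "norm ls = 1" unfolding ls_def H_def
    using e2 orthogonal_transformation_norm[OF hh_orth[of "u - e1"]] by simp
  have lsu: "ls \<bullet> u = 0" unfolding ls_def
    using hh_inner[of "u - e1" e2 e1] He1 e12 unfolding H_def[symmetric]
    by (simp add: inner_commute)
  have HH: "H ls = e2" unfolding ls_def H_def by (rule hh_invol)
  have eq: "J e q x ls = J e q (norm x *\<^sub>R e1) e2"
    using J_orth[OF hh_orth[of "u - e1"], where x=x and l=ls and e=e and q=q] unfolding H_def[symmetric] Hx HH by simp
  have perp: "J e q x m = J e q x ls" if "m \<bullet> u = 0" "norm m = 1" for m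
    by (rule J_perp[OF xu that(1) lsu]) (simp add: that nls)
  show "\<forall>l\<in>sphere 0 1. J e q x l \<le> J e q (norm x *\<^sub>R e1) e2"
  proof
    fix l :: 'a assume "l \<in> sphere 0 1"
    then have l: "norm l = 1" by simp
    define t where "t = l \<bullet> u"
    have "J e q x l \<le> J e q x ls"
    proof (cases "t = 0")
      case True
      then show ?thesis using perp[of l] l unfolding t_def by simp
    next
      case False
      define m where "m = l - t *\<^sub>R u"
      have mu: "m \<bullet> u = 0" unfolding m_def t_def using u by (simp add: inner_diff_left dot_square_norm)
      have nm2: "(norm m)\<^sup>2 = 1 - t\<^sup>2"
      proof -
        have "(norm m)\<^sup>2 = m \<bullet> m" by (simp add: power2_norm_eq_inner)
        also have "\<dots> = l \<bullet> l - 2 * t * (l \<bullet> u) + t\<^sup>2 * (u \<bullet> u)"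
          unfolding m_def by (simp add: inner_diff_left inner_diff_right inner_commute power2_eq_square algebra_simps)
        also have "\<dots> = 1 - t\<^sup>2" using l u unfolding t_def by (simp add: dot_square_norm power2_eq_square)
        finally show ?thesis .
      qed
      show ?thesis
      proof (cases "m = 0")
        case True
        then have "u = (1/t) *\<^sub>R l + 0 *\<^sub>R ls" unfolding m_def using False by simp
        then show ?thesis
          by (rule J_cmp_decr[OF x q u xu l nls _ _ p]) simp
      next
        case mne: False
        define l2 where "l2 = m /\<^sub>R norm m"
        have nl2: "norm l2 = 1" unfolding l2_def using mne by simp
        have l2u: "l2 \<bullet> u = 0" unfolding l2_def using mu by simp
        have "u = (1/t) *\<^sub>R l + (- norm m / t) *\<^sub>R l2"
          unfolding l2_def m_def using False mne by (simp add: algebra_simps divide_simps)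
        moreover have "(- norm m / t)\<^sup>2 \<le> (1/t)\<^sup>2"
          using nm2 False by (simp add: power_divide divide_right_mono)
        ultimately have "J e q x l \<le> J e q x l2"
          by (intro J_cmp_decr[OF x q u xu l nl2 _ _ p])
        also have "\<dots> = J e q x ls" by (rule perp[OF l2u nl2])
        finally show ?thesis .
      qed
    qed
    then show "J e q x l \<le> J e q (norm x *\<^sub>R e1) e2" by (simp add: eq)
  qed
  show "\<exists>l\<in>sphere 0 1. J e q x l = J e q (norm x *\<^sub>R e1) e2"
    using eq nls by auto
qed

lemma J_const:
  fixes x l l' e1 :: "'a::euclidean_space"
  assumes x: "norm x < 1" and q: "0 < q" and e1: "norm e1 = 1" and e: "e = 0 \<or> e = 2"
    and l: "norm l = 1" and l': "norm l' = 1"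
  shows "J e q x l = J e q x l'"
proof -
  obtain u where u: "norm u = 1" and xu: "x = norm x *\<^sub>R u" using ex_dir[OF e1] by blast
  define C where "C = (if e = 0 then 1 else 1 + (norm x)\<^sup>2)"
  have AC: "Aa e x \<eta> = C" if "\<eta> \<in> sphere 0 1" for \<eta>
  proof -
    have n\<eta>: "norm \<eta> = 1" using that by simp
    define s where "s = \<eta> \<bullet> u"
    have s1: "\<bar>s\<bar> \<le> 1" using Cauchy_Schwarz_ineq2[of \<eta> u] n\<eta> u unfolding s_def by simp
    have B1: "0 < 1 + (norm x)\<^sup>2 - 2 * norm x * s"
      by (rule Bminus_pos) (use x s1 in auto)
    have B2: "0 < 1 + (norm x)\<^sup>2 - 2 * norm x * (-s)"
      by (rule Bminus_pos) (use x s1 in auto)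
    have "Aa e x \<eta> = Phi (norm x) (e/2) s" unfolding s_def by (rule Aa_Phi[OF x u xu n\<eta>])
    also have "\<dots> = C"
      using e B1 B2 unfolding Phi_def C_def by auto
    finally show ?thesis .
  qed
  have avgK: "sphere_avg (\<lambda>\<eta>. \<bar>\<eta> \<bullet> l\<bar> powr q) = sphere_avg (\<lambda>\<eta>. \<bar>\<eta> \<bullet> l'\<bar> powr q)"
  proof -
    define R where "R = hh (l' - l)"
    have Rl: "R l' = l" unfolding R_def by (rule hh_swap) (simp add: l l')
    have "sphere_avg (\<lambda>\<eta>. (\<lambda>\<zeta>. \<bar>\<zeta> \<bullet> l'\<bar> powr q) (R \<eta>)) = sphere_avg (\<lambda>\<zeta>. \<bar>\<zeta> \<bullet> l'\<bar> powr q)"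
      unfolding R_def by (rule sphere_avg_orth[OF hh_orth]) measurable
    moreover have "(\<lambda>\<eta>. (\<lambda>\<zeta>. \<bar>\<zeta> \<bullet> l'\<bar> powr q) (R \<eta>)) = (\<lambda>\<eta>. \<bar>\<eta> \<bullet> l\<bar> powr q)"
      unfolding R_def by (simp add: fun_eq_iff hh_adj Rl[unfolded R_def])
    ultimately show ?thesis by simp
  qed
  have "J e q x l = sphere_avg (\<lambda>\<eta>. Aa e x \<eta> * \<bar>\<eta> \<bullet> l\<bar> powr q)" by (rule J_sym[OF x q])
  also have "\<dots> = sphere_avg (\<lambda>\<eta>. C * \<bar>\<eta> \<bullet> l\<bar> powr q)"
    by (rule sphere_avg_cong) (auto intro!: nice_mult nice_Aa nice_K x q nice_const simp: AC)
  also have "\<dots> = C * sphere_avg (\<lambda>\<eta>. \<bar>\<eta> \<bullet> l'\<bar> powr q)" by (simp add: sphere_avg_cmult avgK)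
  also have "\<dots> = sphere_avg (\<lambda>\<eta>. C * \<bar>\<eta> \<bullet> l'\<bar> powr q)" by (simp add: sphere_avg_cmult)
  also have "\<dots> = sphere_avg (\<lambda>\<eta>. Aa e x \<eta> * \<bar>\<eta> \<bullet> l'\<bar> powr q)"
    by (rule sphere_avg_cong) (auto intro!: nice_mult nice_Aa nice_K x q nice_const simp: AC)
  also have "\<dots> = J e q x l'" by (rule J_sym[OF x q, symmetric])
  finally show ?thesis .
qed



lemma l_vec_0: "l_vec e1 e2 0 = e1" by (simp add: l_vec_def)
lemma l_vec_pi2: "l_vec e1 e2 (pi/2) = e2" by (simp add: l_vec_def)

lemma l_vec_norm:
  fixes e1 e2 :: "'a::euclidean_space"
  assumes "norm e1 = 1" "norm e2 = 1" "e1 \<bullet> e2 = 0"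
  shows "norm (l_vec e1 e2 \<beta>) = 1"
proof -
  have "l_vec e1 e2 \<beta> \<bullet> l_vec e1 e2 \<beta> = (cos \<beta>)\<^sup>2 * (e1 \<bullet> e1) + 2 * cos \<beta> * sin \<beta> * (e1 \<bullet> e2) + (sin \<beta>)\<^sup>2 * (e2 \<bullet> e2)"
    by (simp add: l_vec_def inner_add_left inner_add_right inner_commute power2_eq_square algebra_simps)
  also have "\<dots> = 1" using assms by (simp add: dot_square_norm)
  finally show ?thesis by (simp add: norm_eq_1)
qed

theorem corollary2p2:
  fixes \<alpha> q :: real and x e1 e2 :: "'a::euclidean_space"
  assumes "DIM('a) \<ge> 3" and "\<alpha> < 1" and "q \<ge> 1" and "x \<in> ball 0 1"
    and "e1 \<in> Basis" and "e2 \<in> Basis" and "e1 \<noteq> e2"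
  shows "(q = (2 * real DIM('a) - 2) / (real DIM('a) - \<alpha>) \<or> q = 2 * real DIM('a) / (real DIM('a) - \<alpha>)
           \<longrightarrow> (\<exists>c. \<forall>l \<in> sphere 0 1. I_int \<alpha> q x l = c))
       \<and> ((2 * real DIM('a) - 2) / (real DIM('a) - \<alpha>) < q \<and> q < 2 * real DIM('a) / (real DIM('a) - \<alpha>)
           \<longrightarrow> (SUP l \<in> sphere 0 1. I_int \<alpha> q x l) = I_int \<alpha> q (norm x *\<^sub>R e1) (l_vec e1 e2 (pi/2))
             \<and> (\<forall>\<beta> \<in> {0..pi/2}. I_int \<alpha> q (norm x *\<^sub>R e1) (l_vec e1 e2 \<beta>)
                    \<le> I_int \<alpha> q (norm x *\<^sub>R e1) (l_vec e1 e2 (pi/2))))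
       \<and> (q < (2 * real DIM('a) - 2) / (real DIM('a) - \<alpha>) \<or> q > 2 * real DIM('a) / (real DIM('a) - \<alpha>)
           \<longrightarrow> (SUP l \<in> sphere 0 1. I_int \<alpha> q x l) = I_int \<alpha> q (norm x *\<^sub>R e1) (l_vec e1 e2 0)
             \<and> (\<forall>\<beta> \<in> {0..pi/2}. I_int \<alpha> q (norm x *\<^sub>R e1) (l_vec e1 e2 \<beta>)
                    \<le> I_int \<alpha> q (norm x *\<^sub>R e1) (l_vec e1 e2 0)))"
proof -
  define n where "n = real DIM('a)"
  define E where "E = (n - \<alpha>) * q - 2 * n + 2"
  have I: "I_int \<alpha> q y l = J E q y l" for y l :: 'a
    unfolding I_int_J E_def n_def ..
  have x: "norm x < 1" using assms(4) by simp
  have q: "0 < q" using assms(3) by simp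
  have e1: "norm e1 = 1" using assms(5) by simp
  have e2: "norm e2 = 1" using assms(6) by simp
  have e12: "e1 \<bullet> e2 = 0" using assms(5-7) by (simp add: inner_Basis)
  have npos: "0 < n - \<alpha>" unfolding n_def using assms(1,2) by simp
  have x': "norm (norm x *\<^sub>R e1) < 1" using x e1 by simp
  have nx': "norm (norm x *\<^sub>R e1) = norm x" using e1 by simp
  have lvs: "l_vec e1 e2 \<beta> \<in> sphere 0 1" for \<beta>
    using l_vec_norm[OF e1 e2 e12] by simp
  have P1: "\<exists>c. \<forall>l \<in> sphere 0 1. I_int \<alpha> q x l = c"
    if "q = (2 * n - 2) / (n - \<alpha>) \<or> q = 2 * n / (n - \<alpha>)"
  proof -
    have "E = 0 \<or> E = 2" using that npos unfolding E_def by (auto simp: field_simps)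
    then have "\<forall>l \<in> sphere 0 1. I_int \<alpha> q x l = J E q x e1"
      unfolding I using J_const[OF x q e1 _ _ e1] by auto
    then show ?thesis by blast
  qed
  have P2: "(SUP l \<in> sphere 0 1. I_int \<alpha> q x l) = I_int \<alpha> q (norm x *\<^sub>R e1) (l_vec e1 e2 (pi/2))
             \<and> (\<forall>\<beta> \<in> {0..pi/2}. I_int \<alpha> q (norm x *\<^sub>R e1) (l_vec e1 e2 \<beta>)
                    \<le> I_int \<alpha> q (norm x *\<^sub>R e1) (l_vec e1 e2 (pi/2)))"
    if "(2 * n - 2) / (n - \<alpha>) < q \<and> q < 2 * n / (n - \<alpha>)"
  proof -
    have "0 < E" "E < 2" using that npos unfolding E_def by (auto simp: field_simps)
    then have p: "0 \<le> E/2" "E/2 \<le> 1" by auto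
    note A = J_sup_decr[OF x q e1 e2 e12 p]
    note B = J_sup_decr[OF x' q e1 e2 e12 p, unfolded nx']
    obtain l0 where l0: "l0 \<in> sphere 0 1" "J E q x l0 = J E q (norm x *\<^sub>R e1) e2" using A(2) by blast
    have "(SUP l \<in> sphere 0 1. J E q x l) = J E q (norm x *\<^sub>R e1) e2"
    proof (rule cSup_eq_maximum)
      show "J E q (norm x *\<^sub>R e1) e2 \<in> J E q x ` sphere 0 1" using l0 by (metis image_eqI)
    qed (use A(1) in auto)
    moreover have "\<forall>\<beta> \<in> {0..pi/2}. J E q (norm x *\<^sub>R e1) (l_vec e1 e2 \<beta>) \<le> J E q (norm x *\<^sub>R e1) e2"
      using B(1) lvs by blast
    ultimately show ?thesis unfolding I l_vec_pi2 by simp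
  qed
  have P3: "(SUP l \<in> sphere 0 1. I_int \<alpha> q x l) = I_int \<alpha> q (norm x *\<^sub>R e1) (l_vec e1 e2 0)
             \<and> (\<forall>\<beta> \<in> {0..pi/2}. I_int \<alpha> q (norm x *\<^sub>R e1) (l_vec e1 e2 \<beta>)
                    \<le> I_int \<alpha> q (norm x *\<^sub>R e1) (l_vec e1 e2 0))"
    if "q < (2 * n - 2) / (n - \<alpha>) \<or> q > 2 * n / (n - \<alpha>)"
  proof -
    have "E < 0 \<or> 2 < E" using that npos unfolding E_def by (auto simp: field_simps)
    then have p: "E/2 \<le> 0 \<or> 1 \<le> E/2" by auto
    note A = J_sup_incr[OF x q e1 p]
    note B = J_sup_incr[OF x' q e1 p, unfolded nx']
    obtain l0 where l0: "l0 \<in> sphere 0 1" "J E q x l0 = J E q (norm x *\<^sub>R e1) e1" using A(2) by blast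
    have "(SUP l \<in> sphere 0 1. J E q x l) = J E q (norm x *\<^sub>R e1) e1"
    proof (rule cSup_eq_maximum)
      show "J E q (norm x *\<^sub>R e1) e1 \<in> J E q x ` sphere 0 1" using l0 by (metis image_eqI)
    qed (use A(1) in auto)
    moreover have "\<forall>\<beta> \<in> {0..pi/2}. J E q (norm x *\<^sub>R e1) (l_vec e1 e2 \<beta>) \<le> J E q (norm x *\<^sub>R e1) e1"
      using B(1) lvs by blast
    ultimately show ?thesis unfolding I l_vec_0 by simp
  qed
  show ?thesis using P1 P2 P3 unfolding n_def by blast
qed


end
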